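(* Let $X,Y$ be non-empty subsets of $A^+$. (i) If $X$ is a prefix code, $Y$ is a suffix code and $XY$ is a code, then $(X,Y)$ is a strong alternative code. (ii) If $(X,Y)$ is a strong alternative code, then $X$ is a prefix code and $Y$ is a suffix code.
   Context: $A$ is a finite alphabet, $A^*$ the set of words, $A^+$ the non-empty words, $XY=\{xy:x\in X,y\in Y\}$. For $X,Z\subseteq A^*$: $X^{-1}Z=\{u\in A^*: xu\in Z \text{ for some } x\in X\}$ and $ZY^{-1}=\{u\in A^*: uy\in Z\text{ for some } y\in Y\}$. A code is a subset of $A^+$ in which every word has at most one factorization into its elements. A prefix (suffix) code is a subset of $A^+$ in which no word is a proper prefix (suffix) of another. For non-empty $X,Y\subseteq A^+$, $(X,Y)$ is an alternative code if no word of $A^+$ admits two different similar alternative factorizations on $(X,Y)$ (factorizations $u_1\cdots u_n$, $n\ge2$, $u_i\in X\cup Y$, alternating between $X$ and $Y$; similar = beginning in the same set and ending in the same set); equivalently, $XY$ is a code and each element of $XY$ has exactly one factorization $xy$ with $x\in X,y\in Y$. An alternative code $(X,Y)$ is a strong alternative code if $X^{-1}(XY)\subseteq Y$ and $(XY)Y^{-1}\subseteq X$. *)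

theory Defs
  imports Main
begin

(* Words over alphabet 'a are lists; A^+ = nonempty lists. *)

definition conc :: "'a list set \<Rightarrow> 'a list set \<Rightarrow> 'a list set" where
  "conc X Y = {x @ y | x y. x \<in> X \<and> y \<in> Y}"

definition lquot :: "'a list set \<Rightarrow> 'a list set \<Rightarrow> 'a list set" where
  "lquot X Z = {u. \<exists>x\<in>X. x @ u \<in> Z}"

definition rquot :: "'a list set \<Rightarrow> 'a list set \<Rightarrow> 'a list set" where
  "rquot Z Y = {u. \<exists>y\<in>Y. u @ y \<in> Z}"

definition is_code :: "'a list set \<Rightarrow> bool" where
  "is_code C \<longleftrightarrow> [] \<notin> C \<and>
     (\<forall>us vs. set us \<subseteq> C \<longrightarrow> set vs \<subseteq> C \<longrightarrow> concat us = concat vs \<longrightarrow> us = vs)"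

definition prefix_code :: "'a list set \<Rightarrow> bool" where
  "prefix_code C \<longleftrightarrow> [] \<notin> C \<and>
     (\<forall>u\<in>C. \<forall>v\<in>C. \<forall>w. v = u @ w \<longrightarrow> w = [])"

definition suffix_code :: "'a list set \<Rightarrow> bool" where
  "suffix_code C \<longleftrightarrow> [] \<notin> C \<and>
     (\<forall>u\<in>C. \<forall>v\<in>C. \<forall>w. v = w @ u \<longrightarrow> w = [])"

definition alt_fact :: "'a list set \<Rightarrow> 'a list set \<Rightarrow> ('a list \<times> bool) list \<Rightarrow> bool" where
  "alt_fact X Y fs \<longleftrightarrow> length fs \<ge> 2 \<and>
     (\<forall>(u, b)\<in>set fs. if b then u \<in> X else u \<in> Y) \<and>
     (\<forall>i. Suc i < length fs \<longrightarrow> snd (fs ! Suc i) = (\<not> snd (fs ! i)))"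

definition alternative_code :: "'a list set \<Rightarrow> 'a list set \<Rightarrow> bool" where
  "alternative_code X Y \<longleftrightarrow> X \<noteq> {} \<and> Y \<noteq> {} \<and> [] \<notin> X \<and> [] \<notin> Y \<and>
     (\<forall>fs gs. alt_fact X Y fs \<longrightarrow> alt_fact X Y gs \<longrightarrow>
        concat (map fst fs) = concat (map fst gs) \<longrightarrow>
        snd (hd fs) = snd (hd gs) \<longrightarrow> snd (last fs) = snd (last gs) \<longrightarrow> fs = gs)"

definition strong_alternative_code :: "'a list set \<Rightarrow> 'a list set \<Rightarrow> bool" where
  "strong_alternative_code X Y \<longleftrightarrow> alternative_code X Y \<and>
     lquot X (conc X Y) \<subseteq> Y \<and> rquot (conc X Y) Y \<subseteq> X"

end

theory Submission
  imports Defs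
begin

fun alts :: "bool \<Rightarrow> ('a list \<times> bool) list \<Rightarrow> bool" where
  "alts b [] = True"
| "alts b ((u,c)#r) = (c = b \<and> alts (\<not> b) r)"

definition altc :: "('a list \<times> bool) list \<Rightarrow> bool" where
  "altc fs \<longleftrightarrow> (\<forall>i. Suc i < length fs \<longrightarrow> snd (fs ! Suc i) = (\<not> snd (fs ! i)))"

lemma all_suc_split: "(\<forall>i::nat. Q i) \<longleftrightarrow> Q 0 \<and> (\<forall>i. Q (Suc i))"
  by (metis not0_implies_Suc)

lemma altc_cons2: "altc (a#b#r) \<longleftrightarrow> snd b = (\<not> snd a) \<and> altc (b#r)"
  unfolding altc_def by (subst all_suc_split) auto

lemma altc_alts: "altc fs \<Longrightarrow> fs \<noteq> [] \<Longrightarrow> alts (snd (hd fs)) fs"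
proof (induction fs rule: induct_list012)
  case 1 then show ?case by simp
next
  case (2 x) then show ?case by (cases x) auto
next
  case (3 x y zs)
  obtain u c where x: "x = (u,c)" by (cases x)
  obtain v d where y: "y = (v,d)" by (cases y)
  from 3(3) have "snd y = (\<not> snd x) \<and> altc (y#zs)" by (simp only: altc_cons2)
  then have "d = (\<not> c)" "altc (y#zs)" using x y by auto
  then have "alts d (y#zs)" using 3(2) y by auto
  then show ?case using x y \<open>d = (\<not> c)\<close> by simp
qed

lemma alts_snoc: "alts b xs \<Longrightarrow> xs \<noteq> [] \<Longrightarrow> alts b (xs @ [(u, \<not> snd (last xs))])"
proof (induction xs arbitrary: b)
  case Nil then show ?case by simp
next
  case (Cons a r)
  obtain v c where a: "a = (v,c)" by (cases a)
  show ?case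
  proof (cases "r = []")
    case True then show ?thesis using Cons a by auto
  next
    case False then show ?thesis using Cons a by auto
  qed
qed

definition valid :: "'a list set \<Rightarrow> 'a list set \<Rightarrow> ('a list \<times> bool) list \<Rightarrow> bool" where
  "valid X Y fs \<longleftrightarrow> (\<forall>(u, b)\<in>set fs. if b then u \<in> X else u \<in> Y)"

inductive xy :: "'a list set \<Rightarrow> 'a list set \<Rightarrow> ('a list \<times> bool) list \<Rightarrow> bool" for X Y where
  "xy X Y []"
| "x \<in> X \<Longrightarrow> y \<in> Y \<Longrightarrow> xy X Y r \<Longrightarrow> xy X Y ((x,True)#(y,False)#r)"

lemma to_xy: "alts True fs \<Longrightarrow> valid X Y fs \<Longrightarrow> (fs \<noteq> [] \<longrightarrow> \<not> snd (last fs)) \<Longrightarrow> xy X Y fs"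
proof (induction fs rule: induct_list012)
  case 1 then show ?case by (simp add: xy.intros)
next
  case (2 x) then show ?case by (cases x) auto
next
  case (3 x y zs)
  obtain u c where x: "x = (u,c)" by (cases x)
  obtain v d where y: "y = (v,d)" by (cases y)
  from 3 x y have c: "c" "\<not> d" "alts True zs" by auto
  from 3(4) x y c have uv: "u \<in> X" "v \<in> Y" "valid X Y zs" by (auto simp: valid_def)
  have "zs \<noteq> [] \<longrightarrow> \<not> snd (last zs)" using 3(5) by auto
  with 3(1) c uv have "xy X Y zs" by blast
  then show ?case using x y c uv by (auto intro: xy.intros)
qed

fun pr :: "('a list \<times> bool) list \<Rightarrow> 'a list list" where
  "pr (a#b#r) = (fst a @ fst b) # pr r"
| "pr _ = []"

lemma xy_pr: "xy X Y fs \<Longrightarrow> set (pr fs) \<subseteq> conc X Y \<and> concat (pr fs) = concat (map fst fs)"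
  by (induction rule: xy.induct) (auto simp: conc_def)

lemma pfx:
  assumes P: "prefix_code X" and "x \<in> X" "x' \<in> X" "x @ y = x' @ y'"
  shows "x = x' \<and> y = y'"
proof -
  have Q: "\<And>u v w. u \<in> X \<Longrightarrow> v \<in> X \<Longrightarrow> v = u @ w \<Longrightarrow> w = []"
    using P unfolding prefix_code_def by blast
  obtain us where D: "(x = x' @ us \<and> us @ y = y') \<or> (x @ us = x' \<and> y = us @ y')"
    using assms(4) append_eq_append_conv2 by metis
  show ?thesis
  proof (cases "x = x' @ us \<and> us @ y = y'")
    case True
    then have "us = []" using Q[OF assms(3) assms(2)] by blast
    then show ?thesis using True by simp
  next
    case False
    then have F: "x @ us = x' \<and> y = us @ y'" using D by blast
    then have "us = []" using Q[OF assms(2) assms(3)] by blast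
    then show ?thesis using F by simp
  qed
qed

lemma sfx:
  assumes P: "suffix_code Y" and "y \<in> Y" "y' \<in> Y" "x @ y = x' @ y'"
  shows "x = x' \<and> y = y'"
proof -
  have Q: "\<And>u v w. u \<in> Y \<Longrightarrow> v \<in> Y \<Longrightarrow> v = w @ u \<Longrightarrow> w = []"
    using P unfolding suffix_code_def by blast
  obtain us where D: "(x = x' @ us \<and> us @ y = y') \<or> (x @ us = x' \<and> y = us @ y')"
    using assms(4) append_eq_append_conv2 by metis
  show ?thesis
  proof (cases "x = x' @ us \<and> us @ y = y'")
    case True
    then have "us = []" using Q[OF assms(2) assms(3)] by blast
    then show ?thesis using True by simp
  next
    case False
    then have F: "x @ us = x' \<and> y = us @ y'" using D by blast
    then have "us = []" using Q[OF assms(3) assms(2)] by blast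
    then show ?thesis using F by simp
  qed
qed

lemma xy_uniq:
  assumes "prefix_code X"
  shows "xy X Y fs \<Longrightarrow> xy X Y gs \<Longrightarrow> pr fs = pr gs \<Longrightarrow> fs = gs"
proof (induction arbitrary: gs rule: xy.induct)
  case 1 then show ?case by (cases rule: xy.cases) auto
next
  case (2 x y r)
  from 2(5) show ?case
  proof (cases rule: xy.cases)
    case 1 then show ?thesis using 2 by simp
  next
    case (2 x' y' r')
    then have e: "x @ y = x' @ y'" "pr r = pr r'" using "2.prems" by auto
    have "x = x'" using pfx[OF assms \<open>x \<in> X\<close> \<open>x' \<in> X\<close> e(1)] by simp
    then have "y = y'" using e by simp
    then show ?thesis using \<open>x = x'\<close> 2 "2.IH" e by auto
  qed
qed

lemma alt_fact_iff: "alt_fact X Y fs \<longleftrightarrow> length fs \<ge> 2 \<and> valid X Y fs \<and> altc fs"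
  unfolding alt_fact_def valid_def altc_def by simp

theorem propositionP:
  fixes X Y :: "('a::finite) list set"
  assumes "X \<noteq> {}" and "Y \<noteq> {}" and "[] \<notin> X" and "[] \<notin> Y"
  shows "(prefix_code X \<and> suffix_code Y \<and> is_code (conc X Y) \<longrightarrow> strong_alternative_code X Y)
     \<and> (strong_alternative_code X Y \<longrightarrow> prefix_code X \<and> suffix_code Y)"
proof (intro conjI impI)
  assume H: "prefix_code X \<and> suffix_code Y \<and> is_code (conc X Y)"
  obtain x0 where x0: "x0 \<in> X" using assms by auto
  obtain y0 where y0: "y0 \<in> Y" using assms by auto
  define ext where "ext fs = (if snd (hd fs) then [] else [(x0,True)]) @ fs @
      (if snd (last fs) then [(y0,False)] else [])" for fs :: "('a list \<times> bool) list"
  have ext_xy: "xy X Y (ext fs)" if "alt_fact X Y fs" for fs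
  proof -
    have ne: "fs \<noteq> []" and v: "valid X Y fs" and a: "altc fs"
      using that by (auto simp: alt_fact_iff)
    have a1: "alts (snd (hd fs)) fs" using altc_alts[OF a ne] .
    define F1 where "F1 = (if snd (hd fs) then [] else [(x0,True)]) @ fs"
    have F1a: "alts True F1" using a1 by (cases "snd (hd fs)") (auto simp: F1_def)
    have F1l: "last F1 = last fs" using ne by (simp add: F1_def)
    have F1ne: "F1 \<noteq> []" using ne by (simp add: F1_def)
    have ext: "ext fs = F1 @ (if snd (last F1) then [(y0,False)] else [])"
      unfolding ext_def F1l by (simp add: F1_def)
    have "alts True (ext fs)"
    proof (cases "snd (last F1)")
      case True
      then show ?thesis using alts_snoc[OF F1a F1ne, of y0] ext by simp
    qed (use ext F1a in simp)
    moreover have "valid X Y (ext fs)" using v x0 y0 by (auto simp: ext_def valid_def)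
    moreover have "\<not> snd (last (ext fs))" using ext F1l by auto
    ultimately show ?thesis using to_xy by blast
  qed
  have "alternative_code X Y"
    unfolding alternative_code_def
  proof (intro conjI allI impI)
    fix fs gs assume f: "alt_fact X Y fs" and g: "alt_fact X Y gs"
      and c: "concat (map fst fs) = concat (map fst gs)"
      and h: "snd (hd fs) = snd (hd gs)" and l: "snd (last fs) = snd (last gs)"
    have c2: "concat (map fst (ext fs)) = concat (map fst (ext gs))"
      using c h l by (simp add: ext_def)
    have IC: "is_code (conc X Y)" and PX: "prefix_code X" using H by simp_all
    have code: "\<forall>us vs. set us \<subseteq> conc X Y \<longrightarrow> set vs \<subseteq> conc X Y \<longrightarrow> concat us = concat vs \<longrightarrow> us = vs"
      using IC unfolding is_code_def by (rule conjunct2)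
    have p1: "set (pr (ext fs)) \<subseteq> conc X Y" "concat (pr (ext fs)) = concat (map fst (ext fs))"
      using xy_pr[OF ext_xy[OF f]] by simp_all
    have p2: "set (pr (ext gs)) \<subseteq> conc X Y" "concat (pr (ext gs)) = concat (map fst (ext gs))"
      using xy_pr[OF ext_xy[OF g]] by simp_all
    have "pr (ext fs) = pr (ext gs)"
      using code[rule_format, OF p1(1) p2(1)] p1(2) p2(2) c2 by simp
    then have "ext fs = ext gs" by (rule xy_uniq[OF PX ext_xy[OF f] ext_xy[OF g]])
    then show "fs = gs" using h l by (simp add: ext_def)
  qed (use assms in auto)
  moreover have "lquot X (conc X Y) \<subseteq> Y"
  proof
    fix u assume "u \<in> lquot X (conc X Y)"
    then obtain x x' y where "x \<in> X" "x' \<in> X" "y \<in> Y" "x @ u = x' @ y"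
      by (auto simp: lquot_def conc_def)
    then show "u \<in> Y" using H pfx[of X x x' u y] by simp
  qed
  moreover have "rquot (conc X Y) Y \<subseteq> X"
  proof
    fix u assume "u \<in> rquot (conc X Y) Y"
    then obtain x y y' where "x \<in> X" "y' \<in> Y" "y \<in> Y" "u @ y' = x @ y"
      by (auto simp: rquot_def conc_def)
    then show "u \<in> X" using H sfx[of Y y' y u x] by simp
  qed
  ultimately show "strong_alternative_code X Y" by (simp add: strong_alternative_code_def)
next
  assume S: "strong_alternative_code X Y"
  then have AC: "alternative_code X Y" and L: "lquot X (conc X Y) \<subseteq> Y"
    and R: "rquot (conc X Y) Y \<subseteq> X" by (auto simp: strong_alternative_code_def)
  have U: "\<And>fs gs. alt_fact X Y fs \<Longrightarrow> alt_fact X Y gs \<Longrightarrow>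
        concat (map fst fs) = concat (map fst gs) \<Longrightarrow>
        snd (hd fs) = snd (hd gs) \<Longrightarrow> snd (last fs) = snd (last gs) \<Longrightarrow> fs = gs"
    using AC unfolding alternative_code_def by blast
  have two: "alt_fact X Y [(a,True),(b,False)]" if "a \<in> X" "b \<in> Y" for a b
    using that unfolding alt_fact_def by (auto simp: less_Suc_eq)
  obtain x0 where x0: "x0 \<in> X" using assms by auto
  obtain y0 where y0: "y0 \<in> Y" using assms by auto
  show "prefix_code X" unfolding prefix_code_def
  proof (intro conjI ballI allI impI)
    fix u v w assume u: "u \<in> X" and v: "v \<in> X" and e: "v = u @ w"
    have "v @ y0 \<in> conc X Y" using v y0 by (auto simp: conc_def)
    then have wy: "w @ y0 \<in> Y" using L u e by (auto simp: lquot_def)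
    have cc1: "concat (map fst [(v,True),(y0,False)]) = concat (map fst [(u,True),(w @ y0,False)])"
      using e by simp
    have "[(v,True),(y0,False)] = [(u,True),(w @ y0,False)]"
      by (rule U[OF two[OF v y0] two[OF u wy] cc1]) simp_all
    then show "w = []" using e by simp
  qed (use assms in auto)
  show "suffix_code Y" unfolding suffix_code_def
  proof (intro conjI ballI allI impI)
    fix u v w assume u: "u \<in> Y" and v: "v \<in> Y" and e: "v = w @ u"
    have "x0 @ v \<in> conc X Y" using v x0 by (auto simp: conc_def)
    then have "(x0 @ w) @ u \<in> conc X Y" using e by simp
    then have "x0 @ w \<in> rquot (conc X Y) Y" using u unfolding rquot_def by blast
    then have xw: "x0 @ w \<in> X" using R by blast
    have cc2: "concat (map fst [(x0,True),(v,False)]) = concat (map fst [(x0 @ w,True),(u,False)])"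
      using e by simp
    have "[(x0,True),(v,False)] = [(x0 @ w,True),(u,False)]"
      by (rule U[OF two[OF x0 v] two[OF xw u] cc2]) simp_all
    then show "w = []" using e by simp
  qed (use assms in auto)
qed

end
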